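(* Let $1\le j\le k$. Let $\alpha=(\alpha_1,\dots,\alpha_j,0,\dots,0)\in\mathbb N^k$ (the last $k-j$ entries are zero) and $\beta=(\beta_1,\dots,\beta_k)\in\mathbb P^k$. Then for $t\ge0$ and $\mathrm{Re}(z)<0$, $$\phi\tbinom{\alpha}{\beta}(t)=\phi\tbinom{\alpha_1,\dots,\alpha_{j-1},\alpha_j}{\beta_1,\dots,\beta_{j-1},\beta_j+\beta_{j+1}+\cdots+\beta_k}(t)\;\cdot\;\phi\tbinom{0,\dots,0}{\beta_{j+1},\dots,\beta_k}(0).$$ Here the last factor has $k-j$ columns and is interpreted as $1$ when $j=k$.
   Context: $\mathbb P$ denotes the positive and $\mathbb N$ the nonnegative integers. Let $X=\{x_i:i\in\mathbb P\}$ be commuting indeterminates. For $\gamma\in\mathbb N^m$, $\mu\in\mathbb P^m$, real $t\ge0$ and complex $z$ with $\mathrm{Re}(z)<0$, define $$\phi\tbinom{\gamma}{\mu}(t)=\sum_{0<i_1<\cdots<i_m}x_{i_1}^{\gamma_1}\cdots x_{i_m}^{\gamma_m}e^{(i_1+t)\mu_1z}\cdots e^{(i_m+t)\mu_mz}.$$ The coefficient of each monomial in $X$ is an absolutely convergent series. The empty case $m=0$ gives $1$. *)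

theory Defs
  imports "HOL-Analysis.Analysis"
begin

text \<open>Formal series in the commuting indeterminates x_1, x_2, ... with complex
coefficients are represented by their coefficient functions: a monomial is an
exponent vector e :: nat \<Rightarrow> nat (e n = exponent of x_n), and a series is
a function from monomials to complex numbers.\<close>

type_synonym fseries = "(nat \<Rightarrow> nat) \<Rightarrow> complex"

definition idx_tuples :: "nat \<Rightarrow> nat list set" where
  "idx_tuples m = {is. length is = m \<and> sorted_wrt (<) is \<and> (\<forall>i\<in>set is. 0 < i)}"

definition monom_of :: "nat list \<Rightarrow> nat list \<Rightarrow> (nat \<Rightarrow> nat)" where
  "monom_of g is = (\<lambda>n. \<Sum>l<length is. if is ! l = n then g ! l else 0)"

definition phi :: "nat list \<Rightarrow> nat list \<Rightarrow> real \<Rightarrow> complex \<Rightarrow> fseries" where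
  "phi g mu t z = (\<lambda>e. infsum
     (\<lambda>is. \<Prod>l<length g. exp (complex_of_real (real (is ! l) + t) * of_nat (mu ! l) * z))
     {is \<in> idx_tuples (length g). monom_of g is = e})"

definition series_mult :: "fseries \<Rightarrow> fseries \<Rightarrow> fseries" where
  "series_mult f h = (\<lambda>e. \<Sum>d\<in>{d. d \<le> e}. f d * h (e - d))"

end

theory Submission
  imports Defs
begin

lemma prod_abs_summable:
  fixes f g :: "_ \<Rightarrow> 'c::{real_normed_div_algebra,banach}"
  assumes f: "(\<lambda>x. norm (f x)) summable_on A" and g: "(\<lambda>x. norm (g x)) summable_on B"
  shows "(\<lambda>p. norm (f (fst p) * g (snd p))) summable_on A \<times> B"
proof -
  have "(\<lambda>(x,y). norm (f x) * norm (g y)) summable_on A \<times> B"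
  proof (rule summable_on_SigmaI[where g = "\<lambda>x. norm (f x) * infsum (\<lambda>y. norm (g y)) B"])
    fix x assume "x \<in> A"
    show "((\<lambda>y. case (x, y) of (x, y) \<Rightarrow> norm (f x) * norm (g y)) has_sum norm (f x) * infsum (\<lambda>y. norm (g y)) B) B"
      using g by (simp add: has_sum_cmult_right)
  next
    show "(\<lambda>x. norm (f x) * infsum (\<lambda>y. norm (g y)) B) summable_on A"
      using f by (intro summable_on_cmult_left)
  qed auto
  then show ?thesis by (simp add: case_prod_unfold norm_mult)
qed

lemma prod_infsum:
  fixes f g :: "_ \<Rightarrow> 'c::{real_normed_div_algebra,banach}"
  assumes f: "(\<lambda>x. norm (f x)) summable_on A" and g: "(\<lambda>x. norm (g x)) summable_on B"
  shows "infsum (\<lambda>(x,y). f x * g y) (A \<times> B) = infsum f A * infsum g B"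
proof -
  have s: "(\<lambda>(x,y). f x * g y) summable_on A \<times> B"
    using abs_summable_summable[OF prod_abs_summable[OF f g]] by (simp add: case_prod_unfold)
  have "infsum (\<lambda>(x,y). f x * g y) (A \<times> B) = infsum (\<lambda>x. infsum (\<lambda>y. f x * g y) B) A"
    using infsum_Sigma'_banach[of "\<lambda>x y. f x * g y" A "\<lambda>_. B"] s by simp
  also have "\<dots> = infsum (\<lambda>x. f x * infsum g B) A"
    using abs_summable_summable[OF g] by (simp add: infsum_cmult_right)
  also have "\<dots> = infsum f A * infsum g B"
    using abs_summable_summable[OF f] by (simp add: infsum_cmult_left)
  finally show ?thesis .
qed

definition G :: "real \<Rightarrow> nat list \<Rightarrow> real" where
  "G r xs = (\<Prod>l<length xs. r ^ (xs ! l))"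

lemma G_Cons: "G r (x # xs) = r ^ x * G r xs"
  unfolding G_def length_Cons prod.lessThan_Suc_shift by simp

lemma G_summable:
  assumes "0 \<le> r" "r < 1"
  shows "(\<lambda>xs. norm (G r xs)) summable_on {xs. length xs = n}"
proof (induction n)
  case 0
  have "{xs::nat list. length xs = 0} = {[]}" by auto
  then show ?case by simp
next
  case (Suc n)
  have "(\<lambda>x::nat. norm (r ^ x)) summable_on UNIV"
    using assms by (subst summable_on_UNIV_nonneg_real_iff) auto
  note geo = this
  have eq: "{xs. length xs = Suc n} = (\<lambda>(x,xs). x # xs) ` (UNIV \<times> {xs. length xs = n})"
    by (auto simp: length_Suc_conv image_iff)
  have inj: "inj_on (\<lambda>(x::nat,xs). x # xs) (UNIV \<times> {xs. length xs = n})"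
    by (auto simp: inj_on_def)
  have "(\<lambda>p. norm (r ^ (fst p) * G r (snd p))) summable_on (UNIV \<times> {xs. length xs = n})"
    by (rule prod_abs_summable[OF geo Suc])
  then have "((\<lambda>xs. norm (G r xs)) \<circ> (\<lambda>(x,xs). x # xs)) summable_on (UNIV \<times> {xs. length xs = n})"
    by (simp add: o_def case_prod_unfold G_Cons)
  then show ?case unfolding eq using summable_on_reindex[OF inj] by blast
qed

lemma term_bound:
  assumes "\<forall>l<n. 0 < mu ! l" "0 \<le> t" "Re z < 0" "length is = n"
  shows "norm (\<Prod>l<n. exp (complex_of_real (real (is ! l) + t) * of_nat (mu ! l) * z))
         \<le> G (exp (Re z)) is"
proof -
  have "norm (\<Prod>l<n. exp (complex_of_real (real (is ! l) + t) * of_nat (mu ! l) * z))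
     = (\<Prod>l<n. norm (exp (complex_of_real (real (is ! l) + t) * of_nat (mu ! l) * z)))"
    by (rule prod_norm[symmetric])
  also have "\<dots> \<le> (\<Prod>l<n. exp (Re z) ^ (is ! l))"
  proof (rule prod_mono)
    fix l assume l: "l \<in> {..<n}"
    have m: "1 \<le> real (mu ! l)" using assms(1) l by (simp add: Suc_le_eq)
    have "real (is ! l) \<le> (real (is ! l) + t) * real (mu ! l)"
    proof -
      have "0 \<le> (real (is ! l) + t) * (real (mu ! l) - 1)"
        using m assms(2) by (intro mult_nonneg_nonneg) auto
      then show ?thesis using assms(2) by (simp add: algebra_simps)
    qed
    then have "(real (is ! l) + t) * real (mu ! l) * Re z \<le> real (is ! l) * Re z"
      using assms(3) by (simp add: mult_right_mono_neg)
    then have "exp ((real (is ! l) + t) * real (mu ! l) * Re z) \<le> exp (real (is ! l) * Re z)"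
      by simp
    moreover have "norm (exp (complex_of_real (real (is ! l) + t) * of_nat (mu ! l) * z))
        = exp ((real (is ! l) + t) * real (mu ! l) * Re z)"
      by (simp add: norm_exp_eq_Re)
    moreover have "exp (real (is ! l) * Re z) = exp (Re z) ^ (is ! l)"
      by (rule exp_of_nat_mult)
    ultimately show "0 \<le> norm (exp (complex_of_real (real (is ! l) + t) * of_nat (mu ! l) * z)) \<and> norm (exp (complex_of_real (real (is ! l) + t) * of_nat (mu ! l) * z)) \<le> exp (Re z) ^ (is ! l)"
      by simp
  qed
  finally show ?thesis using assms(4) by (simp add: G_def)
qed

lemma term_summable:
  assumes "\<forall>l<n. 0 < mu ! l" "0 \<le> t" "Re z < 0" "S \<subseteq> {is. length is = n}"
  shows "(\<lambda>is. norm (\<Prod>l<n. exp (complex_of_real (real (is ! l) + t) * of_nat (mu ! l) * z))) summable_on S"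
proof -
  have "(\<lambda>xs. norm (G (exp (Re z)) xs)) summable_on S"
    using G_summable[of "exp (Re z)" n] assms(3) summable_on_subset[OF _ assms(4)] by auto
  then show ?thesis
  proof (rule summable_on_comparison_test)
    fix x assume "x \<in> S"
    then show "norm (\<Prod>l<n. exp (complex_of_real (real (x ! l) + t) * of_nat (mu ! l) * z)) \<le> norm (G (exp (Re z)) x)"
      using term_bound[OF assms(1-3)] assms(4) by fastforce
  qed auto
qed

lemma finite_le_fun:
  fixes e :: "nat \<Rightarrow> nat"
  assumes "\<And>n. N \<le> n \<Longrightarrow> e n = 0"
  shows "finite {d. d \<le> e}"
proof -
  define M where "M = (\<Sum>n<N. e n)"
  have fin: "finite {xs. set xs \<subseteq> {..M} \<and> length xs = N}"
    by (rule finite_lists_length_eq) simp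
  have "{d. d \<le> e} \<subseteq> (\<lambda>xs n. if n < N then xs ! n else 0) ` {xs. set xs \<subseteq> {..M} \<and> length xs = N}"
  proof
    fix d assume "d \<in> {d. d \<le> e}"
    then have d: "\<And>n. d n \<le> e n" by (simp add: le_fun_def)
    have deq: "d = (\<lambda>n. if n < N then map d [0..<N] ! n else 0)"
    proof
      fix n show "d n = (if n < N then map d [0..<N] ! n else 0)"
      proof (cases "n < N")
        case True then show ?thesis by simp
      next
        case False
        then have "e n = 0" using assms by simp
        then show ?thesis using d[of n] False by simp
      qed
    qed
    have sub: "set (map d [0..<N]) \<subseteq> {..M}"
    proof
      fix y assume "y \<in> set (map d [0..<N])"
      then obtain n where n: "n < N" "y = d n" by auto
      have "e n \<le> M" unfolding M_def using n(1) by (intro member_le_sum) auto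
      then show "y \<in> {..M}" using d[of n] n(2) by simp
    qed
    show "d \<in> (\<lambda>xs n. if n < N then xs ! n else 0) ` {xs. set xs \<subseteq> {..M} \<and> length xs = N}"
      by (rule image_eqI[where x = "map d [0..<N]" and f = "\<lambda>xs n. if n < N then xs ! n else 0", OF deq]) (use sub in simp)
  qed
  then show ?thesis using fin finite_surj by blast
qed

lemma monom_support:
  assumes "Suc (\<Sum>l<length is. is ! l) \<le> n"
  shows "monom_of g is n = 0"
proof -
  have "\<And>l. l < length is \<Longrightarrow> is ! l \<noteq> n"
  proof -
    fix l assume "l < length is"
    then have "is ! l \<le> (\<Sum>l<length is. is ! l)" by (intro member_le_sum) auto
    then show "is ! l \<noteq> n" using assms by auto
  qed
  then show ?thesis unfolding monom_of_def by simp
qed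

lemma finite_le_monom: "finite {d. d \<le> monom_of g is}"
  by (rule finite_le_fun[OF monom_support])

lemma monom_zeros: "length is = L \<Longrightarrow> monom_of (replicate L 0) is = (\<lambda>_. 0)"
  unfolding monom_of_def by (auto simp: fun_eq_iff)

lemma idx_len: "is \<in> idx_tuples n \<Longrightarrow> length is = n"
  unfolding idx_tuples_def by auto

lemma phi_zeros:
  "phi (replicate L 0) mu 0 z x = (if x = (\<lambda>_. 0) then phi (replicate L 0) mu 0 z (\<lambda>_. 0) else 0)"
proof (cases "x = (\<lambda>_. 0)")
  case True
  then show ?thesis by simp
next
  case False
  have m: "\<And>is. is \<in> idx_tuples L \<Longrightarrow> monom_of (replicate L 0) is = (\<lambda>_. 0)"
    by (rule monom_zeros, erule idx_len)
  have "{is \<in> idx_tuples L. monom_of (replicate L 0) is = x} = {}"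
  proof (rule equals0I)
    fix xs assume "xs \<in> {is \<in> idx_tuples L. monom_of (replicate L 0) is = x}"
    then have "xs \<in> idx_tuples L" "monom_of (replicate L 0) xs = x" by simp_all
    then show False using m False by metis
  qed
  note E = this
  show ?thesis using False unfolding phi_def length_replicate E by simp
qed

lemma series_mult_zeros:
  assumes "infinite {d. d \<le> e} \<Longrightarrow> f e = 0"
  shows "series_mult f (phi (replicate L 0) mu 0 z) e = f e * phi (replicate L 0) mu 0 z (\<lambda>_. 0)"
proof (cases "finite {d. d \<le> e}")
  case True
  have "series_mult f (phi (replicate L 0) mu 0 z) e
      = (\<Sum>d\<in>{d. d \<le> e}. if d = e then f e * phi (replicate L 0) mu 0 z (\<lambda>_. 0) else 0)"
    unfolding series_mult_def
  proof (rule sum.cong)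
    fix d assume "d \<in> {d. d \<le> e}"
    then have "d \<le> e" by simp
    then have "(e - d = (\<lambda>_. 0)) = (d = e)"
      by (auto simp: fun_eq_iff le_fun_def) (metis diff_is_0_eq le_antisym)
    then show "f d * phi (replicate L 0) mu 0 z (e - d) = (if d = e then f e * phi (replicate L 0) mu 0 z (\<lambda>_. 0) else 0)"
      by (subst phi_zeros) auto
  qed simp
  also have "\<dots> = f e * phi (replicate L 0) mu 0 z (\<lambda>_. 0)"
    using True by (simp add: sum.delta')
  finally show ?thesis .
next
  case False
  then show ?thesis using assms unfolding series_mult_def by simp
qed

lemma sum_split_add: "(\<Sum>l<(j::nat)+L. f l) = (\<Sum>l<j. f l) + (\<Sum>i<L. f (j+i))"
  by (induction L) (simp_all add: add.assoc)

lemma le_last: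
  assumes "sorted_wrt (<) p" "x \<in> set p"
  shows "(x::nat) \<le> last p"
proof -
  obtain i where i: "i < length p" "x = p ! i" using assms(2) by (auto simp: in_set_conv_nth)
  have ne: "p \<noteq> []" using assms(2) by auto
  show ?thesis
  proof (cases "i = length p - 1")
    case True then show ?thesis using i ne by (simp add: last_conv_nth)
  next
    case False
    then have "p ! i < p ! (length p - 1)" using i by (intro sorted_wrt_nth_less[OF assms(1)]) auto
    then show ?thesis using i ne by (simp add: last_conv_nth)
  qed
qed

lemma hmap_idx:
  assumes "p \<in> idx_tuples j" "m \<in> idx_tuples L"
  shows "p @ map (\<lambda>x. last p + x) m \<in> idx_tuples (j+L)"
proof -
  have p: "length p = j" "sorted_wrt (<) p" "\<forall>i\<in>set p. 0 < i" and m: "length m = L" "sorted_wrt (<) m" "\<forall>i\<in>set m. 0 < i"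
    using assms unfolding idx_tuples_def by auto
  have cross: "\<forall>x\<in>set p. \<forall>y\<in>set (map (\<lambda>x. last p + x) m). x < y"
  proof (intro ballI)
    fix x y assume x: "x \<in> set p" and y: "y \<in> set (map (\<lambda>x. last p + x) m)"
    then obtain w where w: "w \<in> set m" "y = last p + w" by auto
    have "x \<le> last p" by (rule le_last[OF p(2) x])
    then show "x < y" using w m(3) by auto
  qed
  have s: "sorted_wrt (<) (map (\<lambda>x. last p + x) m)"
    unfolding sorted_wrt_map using m(2) by simp
  show ?thesis unfolding idx_tuples_def using p m cross s
    by (auto simp: sorted_wrt_append)
qed

lemma hmap_inv:
  fixes p m :: "nat list"
  assumes "length p = j" "1 \<le> j"
  shows "take j (p @ map (\<lambda>x. last p + x) m) = p"
    and "map (\<lambda>x. x - (p @ map (\<lambda>x. last p + x) m) ! (j - 1)) (drop j (p @ map (\<lambda>x. last p + x) m)) = m"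
proof -
  show "take j (p @ map (\<lambda>x. last p + x) m) = p" using assms by simp
  have ne: "p \<noteq> []" using assms by auto
  have "(p @ map (\<lambda>x. last p + x) m) ! (j - 1) = last p"
    using assms ne by (simp add: nth_append last_conv_nth)
  then show "map (\<lambda>x. x - (p @ map (\<lambda>x. last p + x) m) ! (j - 1)) (drop j (p @ map (\<lambda>x. last p + x) m)) = m"
    using assms by (simp add: o_def)
qed

lemma decomp:
  assumes "is \<in> idx_tuples (j+L)" "1 \<le> j"
  shows "take j is \<in> idx_tuples j"
    and "map (\<lambda>x. x - is ! (j - 1)) (drop j is) \<in> idx_tuples L"
    and "take j is @ map (\<lambda>x. last (take j is) + x) (map (\<lambda>x. x - is ! (j - 1)) (drop j is)) = is"
proof -
  have i: "length is = j + L" "sorted_wrt (<) is" "\<forall>i\<in>set is. 0 < i"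
    using assms unfolding idx_tuples_def by auto
  show "take j is \<in> idx_tuples j"
    using i unfolding idx_tuples_def by (auto simp: sorted_wrt_take dest: in_set_takeD)
  have gt: "is ! (j - 1) < y" if yin: "y \<in> set (drop j is)" for y
  proof -
    obtain q where q: "q < length (drop j is)" "y = drop j is ! q" using yin unfolding in_set_conv_nth by blast
    then have "y = is ! (j + q)" using i by simp
    moreover have "is ! (j - 1) < is ! (j + q)"
      using q i assms(2) by (intro sorted_wrt_nth_less[OF i(2)]) auto
    ultimately show ?thesis by simp
  qed
  have sd: "sorted_wrt (<) (drop j is)" using i(2) by (rule sorted_wrt_drop)
  have "sorted_wrt (\<lambda>x y. x - is ! (j - 1) < y - is ! (j - 1)) (drop j is)"
  proof (rule sorted_wrt_mono_rel[OF _ sd])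
    fix x y assume "x \<in> set (drop j is)" "y \<in> set (drop j is)" "x < y"
    then show "x - is ! (j - 1) < y - is ! (j - 1)"
      using gt[of x] by (intro diff_less_mono) auto
  qed
  then have s2: "sorted_wrt (<) (map (\<lambda>x. x - is ! (j - 1)) (drop j is))"
    by (simp add: sorted_wrt_map)
  have p2: "\<forall>y\<in>set (map (\<lambda>x. x - is ! (j - 1)) (drop j is)). 0 < y"
  proof
    fix y assume "y \<in> set (map (\<lambda>x. x - is ! (j - 1)) (drop j is))"
    then obtain x where "x \<in> set (drop j is)" "y = x - is ! (j - 1)" by auto
    then show "0 < y" using gt[of x] by simp
  qed
  have l2: "length (map (\<lambda>x. x - is ! (j - 1)) (drop j is)) = L" using i by simp
  show "map (\<lambda>x. x - is ! (j - 1)) (drop j is) \<in> idx_tuples L"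
    unfolding idx_tuples_def using s2 p2 l2 by blast
  have lt: "last (take j is) = is ! (j - 1)"
    using i assms(2) by (subst last_conv_nth) (auto simp: min_def)
  have "map (\<lambda>x. is ! (j - 1) + (x - is ! (j - 1))) (drop j is) = drop j is"
  proof (rule map_idI)
    fix x assume "x \<in> set (drop j is)"
    then show "is ! (j - 1) + (x - is ! (j - 1)) = x" using gt[of x] by simp
  qed
  then have "map (\<lambda>x. last (take j is) + x) (map (\<lambda>x. x - is ! (j - 1)) (drop j is)) = drop j is"
    unfolding lt by (simp add: o_def)
  then show "take j is @ map (\<lambda>x. last (take j is) + x) (map (\<lambda>x. x - is ! (j - 1)) (drop j is)) = is"
    by simp
qed

lemma monom_append:
  assumes "length a = length p" "length ys = L"
  shows "monom_of (a @ replicate L 0) (p @ ys) = monom_of a p"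
proof
  fix n
  have "monom_of (a @ replicate L 0) (p @ ys) n
      = (\<Sum>l<length p + L. if (p @ ys) ! l = n then (a @ replicate L 0) ! l else 0)"
    unfolding monom_of_def using assms by simp
  also have "\<dots> = (\<Sum>l<length p. if (p @ ys) ! l = n then (a @ replicate L 0) ! l else 0)"
    using assms by (simp add: sum_split_add nth_append)
  also have "\<dots> = monom_of a p n"
    unfolding monom_of_def using assms by (intro sum.cong) (auto simp: nth_append)
  finally show "monom_of (a @ replicate L 0) (p @ ys) n = monom_of a p n" .
qed

lemma sum_drop_eq:
  fixes beta :: "nat list"
  assumes "length beta = Suc j' + L"
  shows "sum_list (drop j' beta) = beta ! j' + (\<Sum>i<L. beta ! (Suc j' + i))"
proof -
  have "drop j' beta = beta ! j' # drop (Suc j') beta"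
    using assms by (simp add: Cons_nth_drop_Suc)
  then have "sum_list (drop j' beta) = beta ! j' + sum_list (drop (Suc j') beta)" by simp
  also have "sum_list (drop (Suc j') beta) = (\<Sum>i<L. drop (Suc j') beta ! i)"
    using assms by (simp add: sum_list_sum_nth atLeast0LessThan)
  also have "\<dots> = (\<Sum>i<L. beta ! (Suc j' + i))"
    using assms by (intro sum.cong) auto
  finally show ?thesis .
qed

lemma term_split:
  fixes p m beta :: "nat list"
  assumes "length p = Suc j'" "length m = L" "length beta = Suc j' + L"
  shows "(\<Prod>l<Suc j'+L. exp (complex_of_real (real ((p @ map (\<lambda>x. last p + x) m) ! l) + t) * of_nat (beta ! l) * z))
       = (\<Prod>l<Suc j'. exp (complex_of_real (real (p ! l) + t) * of_nat ((take j' beta @ [sum_list (drop j' beta)]) ! l) * z))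
       * (\<Prod>l<L. exp (complex_of_real (real (m ! l) + 0) * of_nat (drop (Suc j') beta ! l) * z))"
proof -
  define c where "c = last p"
  have c: "c = p ! j'" unfolding c_def using assms(1) by (subst last_conv_nth) auto
  define X where "X l = complex_of_real (real ((p @ map (\<lambda>x. c + x) m) ! l) + t) * of_nat (beta ! l) * z" for l
  define Y where "Y l = complex_of_real (real (p ! l) + t) * of_nat ((take j' beta @ [sum_list (drop j' beta)]) ! l) * z" for l
  define Z where "Z l = complex_of_real (real (m ! l) + 0) * of_nat (drop (Suc j') beta ! l) * z" for l
  have s1: "(\<Sum>l<Suc j'+L. X l) = (\<Sum>l<j'. X l) + X j' + (\<Sum>i<L. X (Suc j' + i))"
    by (subst sum_split_add) simp
  have s2: "(\<Sum>l<Suc j'. Y l) = (\<Sum>l<j'. Y l) + Y j'" by simp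
  have s3: "(\<Sum>l<j'. X l) = (\<Sum>l<j'. Y l)"
  proof (rule sum.cong)
    fix l assume "l \<in> {..<j'}"
    then have "l < j'" by simp
    then show "X l = Y l" unfolding X_def Y_def using assms by (simp add: nth_append)
  qed simp
  have Xj: "X j' = (complex_of_real (real c + t)) * of_nat (beta ! j') * z"
    unfolding X_def using assms c by (simp add: nth_append)
  have Yj: "Y j' = (complex_of_real (real c + t)) * (of_nat (beta ! j') + (\<Sum>i<L. of_nat (beta ! (Suc j' + i)))) * z"
    unfolding Y_def using assms c by (simp add: nth_append sum_drop_eq)
  have Xi: "X (Suc j' + i) = (complex_of_real (real c + t)) * of_nat (beta ! (Suc j' + i)) * z + Z i" if "i < L" for i
    unfolding X_def Z_def using assms that by (simp add: nth_append algebra_simps)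
  have s4: "(\<Sum>i<L. X (Suc j' + i)) = (complex_of_real (real c + t)) * (\<Sum>i<L. of_nat (beta ! (Suc j' + i))) * z + (\<Sum>i<L. Z i)"
  proof -
    have "(\<Sum>i<L. X (Suc j' + i)) = (\<Sum>i<L. (complex_of_real (real c + t)) * of_nat (beta ! (Suc j' + i)) * z + Z i)"
      by (rule sum.cong[OF refl]) (rule Xi, simp)
    then show ?thesis by (simp add: sum.distrib sum_distrib_left sum_distrib_right)
  qed
  have sumeq: "(\<Sum>l<Suc j'+L. X l) = (\<Sum>l<Suc j'. Y l) + (\<Sum>l<L. Z l)"
    unfolding s1 s2 s3 s4 Xj Yj by (simp add: algebra_simps)
  have "(\<Prod>l<Suc j'+L. exp (X l)) = (\<Prod>l<Suc j'. exp (Y l)) * (\<Prod>l<L. exp (Z l))"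
  proof -
    have "(\<Prod>l<Suc j'+L. exp (X l)) = exp (\<Sum>l<Suc j'+L. X l)" by (rule exp_sum[symmetric]) simp
    also have "\<dots> = exp ((\<Sum>l<Suc j'. Y l) + (\<Sum>l<L. Z l))" by (simp only: sumeq)
    also have "\<dots> = exp (\<Sum>l<Suc j'. Y l) * exp (\<Sum>l<L. Z l)" by (rule exp_add)
    also have "\<dots> = (\<Prod>l<Suc j'. exp (Y l)) * (\<Prod>l<L. exp (Z l))" by (simp only: exp_sum finite_lessThan)
    finally show ?thesis .
  qed
  then show ?thesis unfolding X_def Y_def Z_def c_def .
qed

lemma phi_app: "phi g mu t z e = infsum
     (\<lambda>is. \<Prod>l<length g. exp (complex_of_real (real (is ! l) + t) * of_nat (mu ! l) * z))
     {is \<in> idx_tuples (length g). monom_of g is = e}"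
  unfolding phi_def by simp

lemma main_eq:
  fixes a beta :: "nat list"
  assumes la: "length a = Suc j'" and lb: "length beta = Suc j' + L" and pos: "\<forall>b\<in>set beta. 0 < b"
    and t: "0 \<le> t" and z: "Re z < 0"
  shows "phi (a @ replicate L 0) beta t z e =
         phi a (take j' beta @ [sum_list (drop j' beta)]) t z e * phi (replicate L 0) (drop (Suc j') beta) 0 z (\<lambda>_. 0)"
proof -
  define mu' where "mu' = take j' beta @ [sum_list (drop j' beta)]"
  define F where "F is = (\<Prod>l<Suc j'+L. exp (complex_of_real (real (is ! l) + t) * of_nat (beta ! l) * z))" for "is"
  define F1 where "F1 p = (\<Prod>l<Suc j'. exp (complex_of_real (real (p ! l) + t) * of_nat (mu' ! l) * z))" for p
  define F2 where "F2 m = (\<Prod>l<L. exp (complex_of_real (real (m ! l) + 0) * of_nat (drop (Suc j') beta ! l) * z))" for m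
  define S where "S = {is \<in> idx_tuples (Suc j'+L). monom_of (a @ replicate L 0) is = e}"
  define A where "A = {p \<in> idx_tuples (Suc j'). monom_of a p = e}"
  define B where "B = idx_tuples L"
  define hm where "hm = (\<lambda>(p::nat list, m::nat list). p @ map (\<lambda>x. last p + x) m)"
  define iv where "iv = (\<lambda>is::nat list. (take (Suc j') is, map (\<lambda>x. x - is ! j') (drop (Suc j') is)))"
  have lhs: "phi (a @ replicate L 0) beta t z e = infsum F S"
    unfolding phi_app F_def S_def using la by simp
  have r1: "phi a mu' t z e = infsum F1 A"
    unfolding phi_app F1_def A_def using la by simp
  have B0: "{is \<in> idx_tuples L. monom_of (replicate L 0) is = (\<lambda>_. 0)} = B"
    unfolding B_def using monom_zeros idx_len by blast
  have r2: "phi (replicate L 0) (drop (Suc j') beta) 0 z (\<lambda>_. 0) = infsum F2 B"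
    unfolding phi_app F2_def length_replicate B0 by simp
  have step1: "infsum F S = infsum (\<lambda>(p,m). F1 p * F2 m) (A \<times> B)"
  proof (rule infsum_reindex_bij_witness[where i = hm and j = iv])
    fix x assume xS: "x \<in> S"
    then have xi: "x \<in> idx_tuples (Suc j' + L)" and xm: "monom_of (a @ replicate L 0) x = e"
      unfolding S_def by auto
    note D = decomp[OF xi, simplified]
    show "hm (iv x) = x" unfolding hm_def iv_def using D(3) by simp
    have "monom_of a (take (Suc j') x) = e"
    proof -
      have "monom_of (a @ replicate L 0) (take (Suc j') x @ map (\<lambda>xa. last (take (Suc j') x) + xa) (map (\<lambda>xa. xa - x ! j') (drop (Suc j') x)))
            = monom_of a (take (Suc j') x)"
        by (rule monom_append) (use la idx_len[OF xi] in auto)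
      then show ?thesis using D(3) xm by simp
    qed
    then show "iv x \<in> A \<times> B" unfolding iv_def A_def B_def using D(1,2) by simp
    show "(case iv x of (p, m) \<Rightarrow> F1 p * F2 m) = F x"
    proof -
      have lt: "length (take (Suc j') x) = Suc j'" using D(1) idx_len by blast
      have lm: "length (map (\<lambda>xa. xa - x ! j') (drop (Suc j') x)) = L" using D(2) idx_len by blast
      have "F x = F (take (Suc j') x @ map (\<lambda>xa. last (take (Suc j') x) + xa) (map (\<lambda>xa. xa - x ! j') (drop (Suc j') x)))"
        using D(3) by simp
      also have "\<dots> = F1 (take (Suc j') x) * F2 (map (\<lambda>xa. xa - x ! j') (drop (Suc j') x))"
        unfolding F_def F1_def F2_def mu'_def by (rule term_split[OF lt lm lb])
      finally show ?thesis unfolding iv_def by simp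
    qed
  next
    fix y assume yAB: "y \<in> A \<times> B"
    obtain p m where y: "y = (p, m)" by (cases y)
    have pA: "p \<in> idx_tuples (Suc j')" "monom_of a p = e" and mB: "m \<in> idx_tuples L"
      using yAB y unfolding A_def B_def by auto
    have lp: "length p = Suc j'" using pA(1) idx_len by blast
    have lm: "length m = L" using mB idx_len by blast
    show "iv (hm y) = y"
      unfolding iv_def hm_def y using hmap_inv[OF lp, of m] by simp
    have "hm y \<in> idx_tuples (Suc j' + L)" unfolding hm_def y using hmap_idx[OF pA(1) mB] by simp
    moreover have "monom_of (a @ replicate L 0) (hm y) = e"
      unfolding hm_def y using monom_append[of a p "map (\<lambda>x. last p + x) m" L] la lp lm pA(2) by simp
    ultimately show "hm y \<in> S" unfolding S_def by simp
  qed
  have sum1: "(\<lambda>x. norm (F1 x)) summable_on A"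
    unfolding F1_def
  proof (rule term_summable)
    show "\<forall>l<Suc j'. 0 < mu' ! l"
    proof (intro allI impI)
      fix l assume l: "l < Suc j'"
      show "0 < mu' ! l"
      proof (cases "l < j'")
        case True
        then have "mu' ! l = beta ! l" unfolding mu'_def using lb by (simp add: nth_append)
        moreover have "beta ! l \<in> set beta" using True lb by simp
        ultimately show ?thesis using pos by simp
      next
        case False
        then have "l = j'" using l by simp
        then have "mu' ! l = sum_list (drop j' beta)" unfolding mu'_def using lb by (simp add: nth_append)
        also have "\<dots> = beta ! j' + (\<Sum>i<L. beta ! (Suc j' + i))" using sum_drop_eq[OF lb] .
        finally have "beta ! j' \<le> mu' ! l" by simp
        moreover have "beta ! j' \<in> set beta" using lb by simp
        ultimately show ?thesis using pos by fastforce
      qed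
    qed
  qed (use t z idx_len in \<open>auto simp: A_def\<close>)
  have sum2: "(\<lambda>x. norm (F2 x)) summable_on B"
    unfolding F2_def
  proof (rule term_summable)
    show "\<forall>l<L. 0 < drop (Suc j') beta ! l"
    proof (intro allI impI)
      fix l assume "l < L"
      then have "drop (Suc j') beta ! l \<in> set beta"
        using lb by (metis in_set_dropD length_drop nth_mem diff_Suc_Suc add_diff_cancel_left')
      then show "0 < drop (Suc j') beta ! l" using pos by blast
    qed
  qed (use z idx_len in \<open>auto simp: B_def\<close>)
  show ?thesis
  proof -
    have "phi (a @ replicate L 0) beta t z e = infsum F1 A * infsum F2 B"
      unfolding lhs step1 by (rule prod_infsum[OF sum1 sum2])
    then show ?thesis unfolding r1[unfolded mu'_def] r2 .
  qed
qed

theorem lemma3p7: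
  fixes j k :: nat and a beta :: "nat list" and t :: real and z :: complex
  assumes "1 \<le> j" and "j \<le> k"
    and "length a = j" and "length beta = k" and "\<forall>b\<in>set beta. 0 < b"
    and "0 \<le> t" and "Re z < 0"
  shows "phi (a @ replicate (k - j) 0) beta t z =
         series_mult
           (phi a (take (j - 1) beta @ [sum_list (drop (j - 1) beta)]) t z)
           (phi (replicate (k - j) 0) (drop j beta) 0 z)"
proof -
  obtain j' where j: "j = Suc j'" using assms(1) by (cases j) auto
  define L where "L = k - j"
  have lb: "length beta = Suc j' + L" using assms(2,4) j unfolding L_def by simp
  have la: "length a = Suc j'" using assms(3) j by simp
  define f where "f = phi a (take j' beta @ [sum_list (drop j' beta)]) t z"
  have fz: "f e = 0" if inf: "infinite {d. d \<le> e}" for e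
  proof -
    have "{p \<in> idx_tuples (length a). monom_of a p = e} = {}"
    proof (rule equals0I)
      fix p assume "p \<in> {p \<in> idx_tuples (length a). monom_of a p = e}"
      then have "monom_of a p = e" by simp
      then show False using inf finite_le_monom[of a p] by simp
    qed
    then show ?thesis unfolding f_def phi_app by (simp only: infsum_empty)
  qed
  show ?thesis
  proof
    fix e
    have "series_mult f (phi (replicate L 0) (drop (Suc j') beta) 0 z) e
        = f e * phi (replicate L 0) (drop (Suc j') beta) 0 z (\<lambda>_. 0)"
      by (rule series_mult_zeros) (rule fz)
    also have "\<dots> = phi (a @ replicate L 0) beta t z e"
      unfolding f_def using main_eq[OF la lb assms(5,6,7)] by simp
    finally show "phi (a @ replicate (k - j) 0) beta t z e =
         series_mult
           (phi a (take (j - 1) beta @ [sum_list (drop (j - 1) beta)]) t z)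
           (phi (replicate (k - j) 0) (drop j beta) 0 z) e"
      unfolding f_def L_def j by simp
  qed
qed

end
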